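(* Let $(M,\circ)$ be a fuzzy $\Gamma$-hypersemigroup. Then (i) $\chi_M$ is a left fuzzy $\Gamma$-hyperideal of $(M,\circ)$; (ii) $\chi_M\circ\gamma\circ m=M\circ\gamma\circ m$ for all $m\in M$, $\gamma\in\Gamma$; (iii) $M\circ\gamma\circ m$ is a left fuzzy $\Gamma$-hyperideal of $(M,\circ)$ for all $m\in M$, $\gamma\in\Gamma$; (iv) for any fuzzy subset $\mu\ne0$ of $M$, $\chi_M\circ\gamma\circ\mu$ is a left fuzzy $\Gamma$-hyperideal of $(M,\circ)$ for all $\gamma\in\Gamma$.
   Context: $M,\Gamma$ are nonempty sets; a fuzzy subset of $M$ is a map $M\to[0,1]$. A fuzzy $\Gamma$-hyperoperation assigns to each $(a,\gamma,b)\in M\times\Gamma\times M$ a fuzzy subset $a\circ\gamma\circ b$. For $a\in M$ and fuzzy $\mu$: $(a\circ\gamma\circ\mu)(r)=\bigvee_{t\in M}((a\circ\gamma\circ t)(r)\wedge\mu(t))$ if $\mu\ne0$, else $0$; $(\mu\circ\gamma\circ a)(r)=\bigvee_{t\in M}(\mu(t)\wedge(t\circ\gamma\circ a)(r))$ if $\mu\ne0$, else $0$. For fuzzy $\mu,\nu$: $(\mu\circ\gamma\circ\nu)(t)=\bigvee_{p,q\in M}(\mu(p)\wedge(p\circ\gamma\circ q)(t)\wedge\nu(q))$. $(M,\circ)$ is a fuzzy $\Gamma$-hypersemigroup if $(a\circ\alpha\circ b)\circ\beta\circ c=a\circ\alpha\circ(b\circ\beta\circ c)$ for all $a,b,c\in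 M$, $\alpha,\beta\in\Gamma$. $\chi_M$ is the constant function $1$ on $M$. $M\circ\gamma\circ m$ denotes the fuzzy subset $t\mapsto\bigvee_{p\in M}(p\circ\gamma\circ m)(t)$. For fuzzy sets, $\mu\subseteq\nu$ means $\mu(x)\le\nu(x)$ for all $x$. A fuzzy subset $\mu$ is a left fuzzy $\Gamma$-hyperideal if $a\circ\gamma\circ\mu\subseteq\mu$ for all $a\in M$, $\gamma\in\Gamma$. *)

theory Defs
  imports Complex_Main
begin

text \<open>Fuzzy subsets of a carrier M are modelled as functions 'a => real with values in
[0,1] on M (values outside M are irrelevant). Suprema over M are real suprema (M nonempty,
values bounded in [0,1]).\<close>

definition fuzzy_subset :: "'a set \<Rightarrow> ('a \<Rightarrow> real) \<Rightarrow> bool" where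
  "fuzzy_subset M \<mu> \<longleftrightarrow> (\<forall>x\<in>M. 0 \<le> \<mu> x \<and> \<mu> x \<le> 1)"

definition fuzzy_zero :: "'a set \<Rightarrow> ('a \<Rightarrow> real) \<Rightarrow> bool" where
  "fuzzy_zero M \<mu> \<longleftrightarrow> (\<forall>x\<in>M. \<mu> x = 0)"

definition fuzzy_le :: "'a set \<Rightarrow> ('a \<Rightarrow> real) \<Rightarrow> ('a \<Rightarrow> real) \<Rightarrow> bool" where
  "fuzzy_le M \<mu> \<nu> \<longleftrightarrow> (\<forall>x\<in>M. \<mu> x \<le> \<nu> x)"

definition fuzzy_eq :: "'a set \<Rightarrow> ('a \<Rightarrow> real) \<Rightarrow> ('a \<Rightarrow> real) \<Rightarrow> bool" where
  "fuzzy_eq M \<mu> \<nu> \<longleftrightarrow> (\<forall>x\<in>M. \<mu> x = \<nu> x)"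

definition fuzzy_Gamma_hyperop :: "'a set \<Rightarrow> 'g set \<Rightarrow> ('a \<Rightarrow> 'g \<Rightarrow> 'a \<Rightarrow> 'a \<Rightarrow> real) \<Rightarrow> bool" where
  "fuzzy_Gamma_hyperop M \<Gamma> hop \<longleftrightarrow> (\<forall>a\<in>M. \<forall>g\<in>\<Gamma>. \<forall>b\<in>M. fuzzy_subset M (hop a g b))"

definition elem_fuzzy :: "'a set \<Rightarrow> ('a \<Rightarrow> 'g \<Rightarrow> 'a \<Rightarrow> 'a \<Rightarrow> real) \<Rightarrow> 'a \<Rightarrow> 'g \<Rightarrow> ('a \<Rightarrow> real) \<Rightarrow> 'a \<Rightarrow> real" where
  "elem_fuzzy M hop a g \<mu> = (\<lambda>r. if fuzzy_zero M \<mu> then 0 else (SUP t\<in>M. min (hop a g t r) (\<mu> t)))"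

definition fuzzy_elem :: "'a set \<Rightarrow> ('a \<Rightarrow> 'g \<Rightarrow> 'a \<Rightarrow> 'a \<Rightarrow> real) \<Rightarrow> ('a \<Rightarrow> real) \<Rightarrow> 'g \<Rightarrow> 'a \<Rightarrow> 'a \<Rightarrow> real" where
  "fuzzy_elem M hop \<mu> g a = (\<lambda>r. if fuzzy_zero M \<mu> then 0 else (SUP t\<in>M. min (\<mu> t) (hop t g a r)))"

definition fuzzy_fuzzy :: "'a set \<Rightarrow> ('a \<Rightarrow> 'g \<Rightarrow> 'a \<Rightarrow> 'a \<Rightarrow> real) \<Rightarrow> ('a \<Rightarrow> real) \<Rightarrow> 'g \<Rightarrow> ('a \<Rightarrow> real) \<Rightarrow> 'a \<Rightarrow> real" where
  "fuzzy_fuzzy M hop \<mu> g \<nu> = (\<lambda>t. SUP pq\<in>M \<times> M. min (min (\<mu> (fst pq)) (hop (fst pq) g (snd pq) t)) (\<nu> (snd pq)))"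

definition M_elem :: "'a set \<Rightarrow> ('a \<Rightarrow> 'g \<Rightarrow> 'a \<Rightarrow> 'a \<Rightarrow> real) \<Rightarrow> 'g \<Rightarrow> 'a \<Rightarrow> 'a \<Rightarrow> real" where
  "M_elem M hop g m = (\<lambda>t. SUP p\<in>M. hop p g m t)"

definition chi :: "'a set \<Rightarrow> 'a \<Rightarrow> real" where
  "chi M = (\<lambda>x. 1)"

definition fuzzy_Gamma_hypersemigroup :: "'a set \<Rightarrow> 'g set \<Rightarrow> ('a \<Rightarrow> 'g \<Rightarrow> 'a \<Rightarrow> 'a \<Rightarrow> real) \<Rightarrow> bool" where
  "fuzzy_Gamma_hypersemigroup M \<Gamma> hop \<longleftrightarrow> M \<noteq> {} \<and> \<Gamma> \<noteq> {} \<and> fuzzy_Gamma_hyperop M \<Gamma> hop \<and>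
     (\<forall>a\<in>M. \<forall>b\<in>M. \<forall>c\<in>M. \<forall>\<alpha>\<in>\<Gamma>. \<forall>\<beta>\<in>\<Gamma>.
        fuzzy_eq M (fuzzy_elem M hop (hop a \<alpha> b) \<beta> c) (elem_fuzzy M hop a \<alpha> (hop b \<beta> c)))"

definition left_fuzzy_Gamma_hyperideal :: "'a set \<Rightarrow> 'g set \<Rightarrow> ('a \<Rightarrow> 'g \<Rightarrow> 'a \<Rightarrow> 'a \<Rightarrow> real) \<Rightarrow> ('a \<Rightarrow> real) \<Rightarrow> bool" where
  "left_fuzzy_Gamma_hyperideal M \<Gamma> hop \<mu> \<longleftrightarrow> fuzzy_subset M \<mu> \<and>
     (\<forall>a\<in>M. \<forall>g\<in>\<Gamma>. fuzzy_le M (elem_fuzzy M hop a g \<mu>) \<mu>)"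

end

theory Submission
  imports Defs
begin

lemma min_sup_le:
  fixes f :: "'i \<Rightarrow> real"
  assumes "I \<noteq> {}" "\<And>i. i \<in> I \<Longrightarrow> min (f i) c \<le> S"
  shows "min (SUP i\<in>I. f i) c \<le> S"
proof (cases "c \<le> S")
  case True then show ?thesis by simp
next
  case False
  then have "\<And>i. i \<in> I \<Longrightarrow> f i \<le> S" using assms(2) by fastforce
  then have "(SUP i\<in>I. f i) \<le> S" using assms(1) by (intro cSUP_least) auto
  then show ?thesis by simp
qed

lemma sup_upper1:
  fixes f :: "'i \<Rightarrow> real"
  assumes "i \<in> I" "\<And>j. j \<in> I \<Longrightarrow> f j \<le> B" "x \<le> f i"
  shows "x \<le> (SUP j\<in>I. f j)"
proof -
  have "bdd_above (f ` I)" using assms(2) by (intro bdd_aboveI2) auto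
  then show ?thesis using assms(1,3) by (meson cSUP_upper order_trans)
qed


theorem theorem4p6:
  assumes "fuzzy_Gamma_hypersemigroup M \<Gamma> hop"
  shows "left_fuzzy_Gamma_hyperideal M \<Gamma> hop (chi M) \<and>
    (\<forall>m\<in>M. \<forall>\<gamma>\<in>\<Gamma>. fuzzy_eq M (fuzzy_elem M hop (chi M) \<gamma> m) (M_elem M hop \<gamma> m)) \<and>
    (\<forall>m\<in>M. \<forall>\<gamma>\<in>\<Gamma>. left_fuzzy_Gamma_hyperideal M \<Gamma> hop (M_elem M hop \<gamma> m)) \<and>
    (\<forall>\<mu> \<gamma>. fuzzy_subset M \<mu> \<and> \<not> fuzzy_zero M \<mu> \<and> \<gamma> \<in> \<Gamma> \<longrightarrow>
           left_fuzzy_Gamma_hyperideal M \<Gamma> hop (fuzzy_fuzzy M hop (chi M) \<gamma> \<mu>))"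
proof -
  have Mne: "M \<noteq> {}" using assms unfolding fuzzy_Gamma_hypersemigroup_def by blast
  have hb: "\<And>a g b r. a \<in> M \<Longrightarrow> g \<in> \<Gamma> \<Longrightarrow> b \<in> M \<Longrightarrow> r \<in> M \<Longrightarrow> 0 \<le> hop a g b r \<and> hop a g b r \<le> 1"
    using assms unfolding fuzzy_Gamma_hypersemigroup_def fuzzy_Gamma_hyperop_def fuzzy_subset_def by blast
  have assoc: "\<And>a b c \<alpha> \<beta> r. a \<in> M \<Longrightarrow> b \<in> M \<Longrightarrow> c \<in> M \<Longrightarrow> \<alpha> \<in> \<Gamma> \<Longrightarrow> \<beta> \<in> \<Gamma> \<Longrightarrow> r \<in> M \<Longrightarrow>
     fuzzy_elem M hop (hop a \<alpha> b) \<beta> c r = elem_fuzzy M hop a \<alpha> (hop b \<beta> c) r"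
    using assms unfolding fuzzy_Gamma_hypersemigroup_def fuzzy_eq_def by blast
  have chinz: "\<not> fuzzy_zero M (chi M)" using Mne unfolding fuzzy_zero_def chi_def by auto
  have i: "left_fuzzy_Gamma_hyperideal M \<Gamma> hop (chi M)"
    unfolding left_fuzzy_Gamma_hyperideal_def
  proof (intro conjI ballI)
    show "fuzzy_subset M (chi M)" unfolding fuzzy_subset_def chi_def by auto
  next
    fix a g assume a: "a \<in> M" and g: "g \<in> \<Gamma>"
    show "fuzzy_le M (elem_fuzzy M hop a g (chi M)) (chi M)"
      unfolding fuzzy_le_def
    proof
      fix r assume "r \<in> M"
      have "(SUP t\<in>M. min (hop a g t r) (chi M t)) \<le> 1"
        using Mne by (intro cSUP_least) (auto simp: chi_def)
      then show "elem_fuzzy M hop a g (chi M) r \<le> chi M r"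
        using chinz unfolding elem_fuzzy_def by (simp add: chi_def)
    qed
  qed
  have ii: "\<forall>m\<in>M. \<forall>\<gamma>\<in>\<Gamma>. fuzzy_eq M (fuzzy_elem M hop (chi M) \<gamma> m) (M_elem M hop \<gamma> m)"
  proof (intro ballI)
    fix m \<gamma> assume m: "m \<in> M" and g: "\<gamma> \<in> \<Gamma>"
    show "fuzzy_eq M (fuzzy_elem M hop (chi M) \<gamma> m) (M_elem M hop \<gamma> m)"
      unfolding fuzzy_eq_def
    proof
      fix r assume r: "r \<in> M"
      have "(SUP t\<in>M. min (chi M t) (hop t \<gamma> m r)) = (SUP t\<in>M. hop t \<gamma> m r)"
        using hb m g r by (intro SUP_cong) (auto simp: chi_def min_def intro: order.antisym)
      then show "fuzzy_elem M hop (chi M) \<gamma> m r = M_elem M hop \<gamma> m r"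
        using chinz unfolding fuzzy_elem_def M_elem_def by simp
    qed
  qed
  have iii: "\<forall>m\<in>M. \<forall>\<gamma>\<in>\<Gamma>. left_fuzzy_Gamma_hyperideal M \<Gamma> hop (M_elem M hop \<gamma> m)"
  proof (intro ballI)
    fix m g assume m: "m \<in> M" and g: "g \<in> \<Gamma>"
    let ?S = "M_elem M hop g m"
    have S0: "\<And>r. r \<in> M \<Longrightarrow> 0 \<le> ?S r"
    proof -
      fix r assume r: "r \<in> M"
      obtain p where p: "p \<in> M" using Mne by blast
      show "0 \<le> ?S r" unfolding M_elem_def
        by (rule sup_upper1[OF p, where B=1]) (use hb m g r p in auto)
    qed
    have S1: "\<And>r. r \<in> M \<Longrightarrow> ?S r \<le> 1"
      unfolding M_elem_def using Mne hb m g by (intro cSUP_least) auto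
    show "left_fuzzy_Gamma_hyperideal M \<Gamma> hop ?S"
      unfolding left_fuzzy_Gamma_hyperideal_def
    proof (intro conjI ballI)
      show "fuzzy_subset M ?S" unfolding fuzzy_subset_def using S0 S1 by auto
    next
      fix a g' assume a: "a \<in> M" and g': "g' \<in> \<Gamma>"
      show "fuzzy_le M (elem_fuzzy M hop a g' ?S) ?S" unfolding fuzzy_le_def
      proof
        fix r assume r: "r \<in> M"
        have key: "min (hop a g' t r) (hop p g m t) \<le> ?S r" if t: "t \<in> M" and p: "p \<in> M" for t p
        proof (cases "fuzzy_zero M (hop p g m)")
          case True
          then have "hop p g m t = 0" using t unfolding fuzzy_zero_def by auto
          then show ?thesis using S0[OF r] by simp
        next
          case False
          have "min (hop a g' t r) (hop p g m t) \<le> (SUP t\<in>M. min (hop a g' t r) (hop p g m t))"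
            by (rule sup_upper1[OF t, where B=1]) (use hb[OF a g' _ r] in \<open>auto intro: min.coboundedI1\<close>)
          also have "\<dots> = elem_fuzzy M hop a g' (hop p g m) r"
            using False unfolding elem_fuzzy_def by simp
          also have "\<dots> = fuzzy_elem M hop (hop a g' p) g m r"
            using assoc a p m g' g r by simp
          also have "\<dots> \<le> ?S r"
          proof (cases "fuzzy_zero M (hop a g' p)")
            case True then show ?thesis using S0[OF r] unfolding fuzzy_elem_def by simp
          next
            case F2: False
            have "(SUP s\<in>M. min (hop a g' p s) (hop s g m r)) \<le> ?S r"
              unfolding M_elem_def
            proof (rule cSUP_least[OF Mne])
              fix s assume s: "s \<in> M"
              show "min (hop a g' p s) (hop s g m r) \<le> (SUP p\<in>M. hop p g m r)"
                by (rule sup_upper1[OF s, where B=1]) (use hb m g r in auto)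
            qed
            then show ?thesis using F2 unfolding fuzzy_elem_def by simp
          qed
          finally show ?thesis .
        qed
        have "(SUP t\<in>M. min (hop a g' t r) (?S t)) \<le> ?S r"
        proof (rule cSUP_least[OF Mne])
          fix t assume t: "t \<in> M"
          have "min (?S t) (hop a g' t r) \<le> ?S r"
            unfolding M_elem_def[of M hop g m, THEN fun_cong[where x=t]]
            by (rule min_sup_le[OF Mne]) (use key t in \<open>auto simp: min.commute\<close>)
          then show "min (hop a g' t r) (?S t) \<le> ?S r" by (simp add: min.commute)
        qed
        then show "elem_fuzzy M hop a g' ?S r \<le> ?S r"
          unfolding elem_fuzzy_def using S0[OF r] by simp
      qed
    qed
  qed
  have iv: "\<forall>\<mu> \<gamma>. fuzzy_subset M \<mu> \<and> \<not> fuzzy_zero M \<mu> \<and> \<gamma> \<in> \<Gamma> \<longrightarrow>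
           left_fuzzy_Gamma_hyperideal M \<Gamma> hop (fuzzy_fuzzy M hop (chi M) \<gamma> \<mu>)"
  proof (intro allI impI)
    fix \<mu> g assume H: "fuzzy_subset M \<mu> \<and> \<not> fuzzy_zero M \<mu> \<and> g \<in> \<Gamma>"
    then have mu: "\<And>x. x \<in> M \<Longrightarrow> 0 \<le> \<mu> x \<and> \<mu> x \<le> 1" and g: "g \<in> \<Gamma>"
      unfolding fuzzy_subset_def by auto
    let ?N = "fuzzy_fuzzy M hop (chi M) g \<mu>"
    have MM: "M \<times> M \<noteq> {}" using Mne by auto
    have Nterm: "min (hop s g q r) (\<mu> q) \<le> ?N r" if "s \<in> M" "q \<in> M" "r \<in> M" for s q r
      unfolding fuzzy_fuzzy_def
      by (rule sup_upper1[where i="(s,q)" and B=1]) (use that hb g mu in \<open>auto simp: chi_def min_def intro: order.antisym\<close>)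
    have N0: "\<And>r. r \<in> M \<Longrightarrow> 0 \<le> ?N r"
    proof -
      fix r assume r: "r \<in> M"
      obtain p where p: "p \<in> M" using Mne by blast
      have "0 \<le> min (hop p g p r) (\<mu> p)" using hb p g r mu by auto
      then show "0 \<le> ?N r" using Nterm[OF p p r] by linarith
    qed
    have N1: "\<And>r. r \<in> M \<Longrightarrow> ?N r \<le> 1"
      unfolding fuzzy_fuzzy_def using MM hb g mu
      by (intro cSUP_least) (auto simp: chi_def)
    show "left_fuzzy_Gamma_hyperideal M \<Gamma> hop ?N"
      unfolding left_fuzzy_Gamma_hyperideal_def
    proof (intro conjI ballI)
      show "fuzzy_subset M ?N" unfolding fuzzy_subset_def using N0 N1 by auto
    next
      fix a g' assume a: "a \<in> M" and g': "g' \<in> \<Gamma>"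
      show "fuzzy_le M (elem_fuzzy M hop a g' ?N) ?N" unfolding fuzzy_le_def
      proof
        fix r assume r: "r \<in> M"
        have key: "min (min (min (chi M p) (hop p g q t)) (\<mu> q)) (hop a g' t r) \<le> ?N r"
          if t: "t \<in> M" and p: "p \<in> M" and q: "q \<in> M" for t p q
        proof (cases "fuzzy_zero M (hop p g q)")
          case True
          then have "hop p g q t = 0" using t unfolding fuzzy_zero_def by auto
          then show ?thesis using N0[OF r] mu[OF q] by (simp add: chi_def)
        next
          case False
          have "min (hop a g' t r) (hop p g q t) \<le> (SUP t\<in>M. min (hop a g' t r) (hop p g q t))"
            by (rule sup_upper1[OF t, where B=1]) (use hb[OF a g' _ r] in \<open>auto intro: min.coboundedI1\<close>)
          also have "\<dots> = elem_fuzzy M hop a g' (hop p g q) r"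
            using False unfolding elem_fuzzy_def by simp
          also have "\<dots> = fuzzy_elem M hop (hop a g' p) g q r"
            using assoc a p q g' g r by simp
          finally have L: "min (hop a g' t r) (hop p g q t) \<le> fuzzy_elem M hop (hop a g' p) g q r" .
          have "min (fuzzy_elem M hop (hop a g' p) g q r) (\<mu> q) \<le> ?N r"
          proof (cases "fuzzy_zero M (hop a g' p)")
            case True then show ?thesis using N0[OF r] mu[OF q] unfolding fuzzy_elem_def by simp
          next
            case F2: False
            have "min (SUP s\<in>M. min (hop a g' p s) (hop s g q r)) (\<mu> q) \<le> ?N r"
            proof (rule min_sup_le[OF Mne])
              fix s assume s: "s \<in> M"
              have "min (hop s g q r) (\<mu> q) \<le> ?N r" by (rule Nterm[OF s q r])
              then show "min (min (hop a g' p s) (hop s g q r)) (\<mu> q) \<le> ?N r" by linarith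
            qed
            then show ?thesis using F2 unfolding fuzzy_elem_def by simp
          qed
          with L show ?thesis using hb[OF p g q t] by (auto simp: chi_def min_def split: if_splits)
        qed
        have "(SUP t\<in>M. min (hop a g' t r) (?N t)) \<le> ?N r"
        proof (rule cSUP_least[OF Mne])
          fix t assume t: "t \<in> M"
          have "min (?N t) (hop a g' t r) \<le> ?N r"
            unfolding fuzzy_fuzzy_def[of M hop "chi M" g \<mu>, THEN fun_cong[where x=t]]
            by (rule min_sup_le[OF MM]) (use key t in auto)
          then show "min (hop a g' t r) (?N t) \<le> ?N r" by (simp add: min.commute)
        qed
        then show "elem_fuzzy M hop a g' ?N r \<le> ?N r"
          unfolding elem_fuzzy_def using N0[OF r] by simp
      qed
    qed
  qed
  show ?thesis using i ii iii iv by blast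
qed

end
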